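(* Let $n\in\mathbb{N}$, $g\in\mathbb{R}$, and $\mathcal{C}=\{q\in\mathbb{R}^n \mid q_1>\dots>q_n\}$. For $q\in\mathcal{C}$, $p\in\mathbb{R}^n$ define the $n\times n$ matrices $$Q_{jk}=q_j\delta_{jk},\qquad L_{jk}=p_j\delta_{jk}+\mathrm{i} g\,\frac{1-\delta_{jk}}{q_j-q_k},\qquad j,k=1,\dots,n,$$ let $v=(1,\dots,1)^\dagger\in\mathbb{R}^n$, and for $z\in\mathbb{C}$ define $$A(z)=\det(z\mathbf{1}_n-L),\qquad C(z)=\operatorname{tr}\big(Q\operatorname{adj}(z\mathbf{1}_n-L)\,vv^\dagger\big),\qquad D(z)=\operatorname{tr}\big(Q\operatorname{adj}(z\mathbf{1}_n-L)\big),$$ where $\operatorname{adj}$ denotes the adjugate matrix (transpose of the cofactor matrix). Then for every $(q,p)\in\mathcal{C}\times\mathbb{R}^n$ and every $z\in\mathbb{C}$, $$C(z)=D(z)+\frac{\mathrm{i} g}{2}A''(z),$$ where $A''$ is the second derivative of the polynomial $A$ in $z$.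
   Context: $Q$ and $L$ are the position and Lax matrices of the rational Calogero--Moser system on the phase space $\mathcal{C}\times\mathbb{R}^n$. *)

theory Defs
  imports Complex_Main "HOL-Analysis.Derivative" "Jordan_Normal_Form.Determinant"
begin

text \<open>Indices j,k = 1..n of the paper are represented by 0..<n.
  Vectors q, p in R^n are functions nat => real (only values below n matter).\<close>

definition mtrace :: "'a::comm_ring_1 mat \<Rightarrow> 'a" where
  "mtrace M = (\<Sum>i<dim_row M. M $$ (i,i))"

definition CM_Q :: "nat \<Rightarrow> (nat \<Rightarrow> real) \<Rightarrow> complex mat" where
  "CM_Q n q = mat n n (\<lambda>(j,k). if j = k then complex_of_real (q j) else 0)"

definition CM_L :: "nat \<Rightarrow> real \<Rightarrow> (nat \<Rightarrow> real) \<Rightarrow> (nat \<Rightarrow> real) \<Rightarrow> complex mat" where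
  "CM_L n g q p = mat n n (\<lambda>(j,k).
      (if j = k then complex_of_real (p j) else 0)
      + \<i> * complex_of_real g * (if j = k then 0 else 1) / complex_of_real (q j - q k))"

text \<open>v v^dagger for v = (1,...,1): the all-ones matrix.\<close>
definition ones_mat :: "nat \<Rightarrow> complex mat" where
  "ones_mat n = mat n n (\<lambda>_. 1)"

definition CM_A :: "nat \<Rightarrow> real \<Rightarrow> (nat \<Rightarrow> real) \<Rightarrow> (nat \<Rightarrow> real) \<Rightarrow> complex \<Rightarrow> complex" where
  "CM_A n g q p z = det (z \<cdot>\<^sub>m 1\<^sub>m n - CM_L n g q p)"

definition CM_C :: "nat \<Rightarrow> real \<Rightarrow> (nat \<Rightarrow> real) \<Rightarrow> (nat \<Rightarrow> real) \<Rightarrow> complex \<Rightarrow> complex" where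
  "CM_C n g q p z = mtrace (CM_Q n q * adj_mat (z \<cdot>\<^sub>m 1\<^sub>m n - CM_L n g q p) * ones_mat n)"

definition CM_D :: "nat \<Rightarrow> real \<Rightarrow> (nat \<Rightarrow> real) \<Rightarrow> (nat \<Rightarrow> real) \<Rightarrow> complex \<Rightarrow> complex" where
  "CM_D n g q p z = mtrace (CM_Q n q * adj_mat (z \<cdot>\<^sub>m 1\<^sub>m n - CM_L n g q p))"

end

theory Submission imports Defs "Jordan_Normal_Form.Char_Poly"
begin

lemma mtrace_add: "A \<in> carrier_mat n n \<Longrightarrow> B \<in> carrier_mat n n \<Longrightarrow> mtrace (A + B) = mtrace A + mtrace B"
  unfolding mtrace_def by (simp add: sum.distrib)

lemma mtrace_minus: "A \<in> carrier_mat n n \<Longrightarrow> B \<in> carrier_mat n n \<Longrightarrow> mtrace (A - B) = mtrace A - mtrace B"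
  unfolding mtrace_def by (simp add: sum_subtractf)

lemma mtrace_smult: "dim_row A \<le> dim_col A \<Longrightarrow> mtrace (k \<cdot>\<^sub>m A) = k * mtrace A"
  unfolding mtrace_def by (auto simp: sum_distrib_left intro!: sum.cong)

lemma mtrace_uminus: "A \<in> carrier_mat n n \<Longrightarrow> mtrace (- A) = - mtrace A"
  unfolding mtrace_def by (simp add: sum_negf)

lemma mtrace_mult_expand: "A \<in> carrier_mat n m \<Longrightarrow> B \<in> carrier_mat m n \<Longrightarrow>
   mtrace (A * B) = (\<Sum>i<n. \<Sum>k<m. A $$ (i,k) * B $$ (k,i))"
  unfolding mtrace_def by (auto simp: scalar_prod_def atLeast0LessThan intro!: sum.cong)

lemma mtrace_comm: "A \<in> carrier_mat n m \<Longrightarrow> B \<in> carrier_mat m n \<Longrightarrow> mtrace (A * B) = mtrace (B * A)"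
  apply (simp add: mtrace_mult_expand)
  apply (subst sum.swap)
  apply (simp add: mult.commute)
  done

lemma mult_ones: fixes X :: "'a::comm_ring_1 mat" assumes "X \<in> carrier_mat n n" "i < n" "j < n"
  shows "(X * mat n n (\<lambda>_. 1)) $$ (i,j) = (\<Sum>k<n. X $$ (i,k))"
  using assms by (auto simp: scalar_prod_def atLeast0LessThan intro!: sum.cong)

lemma mtrace_ones: fixes X :: "'a::comm_ring_1 mat" assumes "X \<in> carrier_mat n n"
  shows "mtrace (X * mat n n (\<lambda>_. 1)) = (\<Sum>i<n. \<Sum>k<n. X $$ (i,k))"
proof -
  have "dim_row (X * mat n n (\<lambda>_. 1)) = n" using assms by simp
  then show ?thesis unfolding mtrace_def using mult_ones[OF assms] by (auto intro!: sum.cong)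
qed

lemma mtrace_ones2: assumes X: "X \<in> carrier_mat n n" and Y: "Y \<in> carrier_mat n n"
  shows "mtrace (X * mat n n (\<lambda>_. 1) * (Y * mat n n (\<lambda>_. 1)))
     = mtrace (X * mat n n (\<lambda>_. 1)) * mtrace (Y * mat n n (\<lambda>_. 1))"
proof -
  let ?J = "mat n n (\<lambda>_. 1)"
  have J: "?J \<in> carrier_mat n n" by simp
  have "mtrace (X * ?J * (Y * ?J)) = (\<Sum>i<n. \<Sum>k<n. (X * ?J) $$ (i,k) * (Y * ?J) $$ (k,i))"
    using X Y by (intro mtrace_mult_expand) auto
  also have "\<dots> = (\<Sum>i<n. \<Sum>k<n. (\<Sum>l<n. X $$ (i,l)) * (\<Sum>l<n. Y $$ (k,l)))"
    using X Y mult_ones[OF X] mult_ones[OF Y] by (auto intro!: sum.cong simp del: index_mult_mat)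
  also have "\<dots> = (\<Sum>i<n. \<Sum>l<n. X $$ (i,l)) * (\<Sum>k<n. \<Sum>l<n. Y $$ (k,l))"
    by (rule sum_product[symmetric])
  finally show ?thesis using X Y by (simp only: mtrace_ones)
qed

lemma smult_one_mult: fixes X :: "'a::comm_ring_1 mat"
  shows "dim_row X = n \<Longrightarrow> (a \<cdot>\<^sub>m 1\<^sub>m n) * X = a \<cdot>\<^sub>m X"
  using mult_smult_assoc_mat[of "1\<^sub>m n" n n X "dim_col X" a] by auto

lemma mult_smult_one: fixes X :: "'a::comm_ring_1 mat"
  shows "dim_col X = n \<Longrightarrow> X * (a \<cdot>\<^sub>m 1\<^sub>m n) = a \<cdot>\<^sub>m X"
  using mult_smult_distrib[of X "dim_row X" n "1\<^sub>m n" n a] by auto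

lemma core:
  fixes M Ad Q J K :: "'a::idom mat"
  assumes M: "M \<in> carrier_mat n n" and Ad: "Ad \<in> carrier_mat n n" and Q: "Q \<in> carrier_mat n n"
    and Jd: "J = mat n n (\<lambda>_. 1)" and Kd: "K = J - 1\<^sub>m n"
    and AdM: "Ad * M = a \<cdot>\<^sub>m 1\<^sub>m n" and MAd: "M * Ad = a \<cdot>\<^sub>m 1\<^sub>m n"
    and QM: "Q * M = M * Q + c \<cdot>\<^sub>m K"
    and c: "c \<noteq> 0"
  shows "2 * a * mtrace (Q * Ad * K) = - c * (mtrace Ad ^ 2 - mtrace (Ad * Ad))"
proof -
  have J: "J \<in> carrier_mat n n" using Jd by simp
  have K: "K \<in> carrier_mat n n" using Kd J by (simp add: minus_carrier_mat)
  note cr = M Ad Q J K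
  have dims: "dim_row M = n" "dim_col M = n" "dim_row Ad = n" "dim_col Ad = n"
    "dim_row Q = n" "dim_col Q = n" "dim_row K = n" "dim_col K = n" "dim_row J = n" "dim_col J = n"
    using cr by auto
  have MQ: "M * Q = Q * M - c \<cdot>\<^sub>m K" using QM cr by auto
  have "Ad * (Q * M) = Ad * (M * Q) + Ad * (c \<cdot>\<^sub>m K)" unfolding QM
    by (rule mult_add_distrib_mat) (use cr in auto)
  also have "Ad * (c \<cdot>\<^sub>m K) = c \<cdot>\<^sub>m (Ad * K)" using cr by (simp add: mult_smult_distrib dims smult_one_mult mult_smult_one)
  finally have "mtrace (Ad * (Q * M)) = mtrace (Ad * (M * Q)) + c * mtrace (Ad * K)"
    using cr by (simp add: mtrace_add[of _ n] mtrace_smult dims smult_one_mult mult_smult_one)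
  moreover have "mtrace (Ad * (M * Q)) = a * mtrace Q"
    using cr by (simp add: assoc_mult_mat[symmetric, of Ad n n M n Q n] AdM mtrace_smult dims smult_one_mult mult_smult_one)
  moreover have "mtrace (Ad * (Q * M)) = a * mtrace Q"
  proof -
    have "mtrace (Ad * (Q * M)) = mtrace ((Ad * Q) * M)" using cr by (simp add: assoc_mult_mat dims smult_one_mult mult_smult_one)
    also have "\<dots> = mtrace (M * (Ad * Q))" using cr by (intro mtrace_comm) auto
    also have "\<dots> = mtrace ((M * Ad) * Q)" using cr by (simp add: assoc_mult_mat dims smult_one_mult mult_smult_one)
    finally show ?thesis using cr by (simp add: MAd mtrace_smult dims smult_one_mult mult_smult_one)
  qed
  ultimately have T1: "mtrace (Ad * K) = 0" using c by simp
  have cAd[simp]: "Ad \<in> carrier_mat n n" "Q \<in> carrier_mat n n" "M \<in> carrier_mat n n" "K \<in> carrier_mat n n" using cr by auto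
  note mc = mult_carrier_mat[of _ n n _ n]
  note dimsS[simp] = dims
  note as = assoc_mult_mat[of _ n n _ n _ n]
  have T2: "a \<cdot>\<^sub>m (Ad * Q) = a \<cdot>\<^sub>m (Q * Ad) + c \<cdot>\<^sub>m (Ad * K * Ad)"
  proof -
    have "Ad * (Q * M) * Ad = (Ad * Q) * (M * Ad)"
      by (metis as mc cAd)
    also have "\<dots> = a \<cdot>\<^sub>m (Ad * Q)" unfolding MAd by (rule mult_smult_one) simp
    finally have e1: "Ad * (Q * M) * Ad = a \<cdot>\<^sub>m (Ad * Q)" .
    have "Ad * (Q * M) * Ad = (Ad * (M * Q) + Ad * (c \<cdot>\<^sub>m K)) * Ad"
      unfolding QM by (subst mult_add_distrib_mat[of _ n n]) (auto intro: mc)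
    also have "\<dots> = Ad * (M * Q) * Ad + Ad * (c \<cdot>\<^sub>m K) * Ad"
      by (rule add_mult_distrib_mat[of _ n n]) (auto intro: mc)
    also have "Ad * (M * Q) * Ad = (Ad * M) * (Q * Ad)"
      by (metis as mc cAd)
    also have "\<dots> = a \<cdot>\<^sub>m (Q * Ad)" unfolding AdM by (rule smult_one_mult) simp
    also have "Ad * (c \<cdot>\<^sub>m K) * Ad = c \<cdot>\<^sub>m (Ad * K * Ad)"
      by (simp add: mult_smult_distrib[of _ n n _ n] mult_smult_assoc_mat[of _ n n _ n] mc)
    finally show ?thesis using e1 by simp
  qed
  have trc: "mtrace (X * Y) = mtrace (Y * X)" if "X \<in> carrier_mat n n" "Y \<in> carrier_mat n n" for X Y
    using mtrace_comm that by blast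
  have trs: "mtrace (k \<cdot>\<^sub>m X) = k * mtrace X" if "X \<in> carrier_mat n n" for k X
    using mtrace_smult[of X k] that by auto
  have tra: "mtrace (X + Y) = mtrace X + mtrace Y" if "X \<in> carrier_mat n n" "Y \<in> carrier_mat n n" for X Y
    using mtrace_add that by blast
  have trm: "mtrace (X - Y) = mtrace X - mtrace Y" if "X \<in> carrier_mat n n" "Y \<in> carrier_mat n n" for X Y
    using mtrace_minus that by blast
  have T3: "mtrace (Ad * K * Ad) = 0"
  proof -
    have "mtrace (a \<cdot>\<^sub>m (Ad * Q)) = mtrace (a \<cdot>\<^sub>m (Q * Ad)) + mtrace (c \<cdot>\<^sub>m (Ad * K * Ad))"
      unfolding T2 by (rule tra) (auto intro: mc)
    moreover have "mtrace (Ad * Q) = mtrace (Q * Ad)" by (rule trc) auto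
    ultimately have "c * mtrace (Ad * K * Ad) = 0"
      by (simp add: trs mc)
    then show ?thesis using c by simp
  qed
  have T4: "mtrace (Ad * Q * K) = - mtrace (Q * Ad * K)"
  proof -
    have "Q * Ad * (Q * M) = Q * Ad * (M * Q) + Q * Ad * (c \<cdot>\<^sub>m K)"
      unfolding QM by (rule mult_add_distrib_mat[of _ n n]) (auto intro: mc)
    also have "Q * Ad * (M * Q) = Q * (Ad * M) * Q" by (metis as mc cAd)
    also have "\<dots> = a \<cdot>\<^sub>m (Q * Q)" unfolding AdM
      by (simp add: mult_smult_one mult_smult_assoc_mat[of _ n n _ n] mc)
    also have "Q * Ad * (c \<cdot>\<^sub>m K) = c \<cdot>\<^sub>m (Q * Ad * K)"
      by (simp add: mult_smult_distrib[of _ n n _ n] mc)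
    finally have e1: "mtrace (Q * Ad * (Q * M)) = a * mtrace (Q * Q) + c * mtrace (Q * Ad * K)"
      by (simp add: tra trs mc)
    have "mtrace (Q * Ad * (Q * M)) = mtrace ((Q * Ad * Q) * M)" by (metis as mc cAd)
    also have "\<dots> = mtrace (M * (Q * Ad * Q))" by (rule trc) (auto intro: mc)
    also have "M * (Q * Ad * Q) = (M * Q) * (Ad * Q)" by (metis as mc cAd)
    also have "\<dots> = Q * M * (Ad * Q) - c \<cdot>\<^sub>m K * (Ad * Q)"
      unfolding MQ by (rule minus_mult_distrib_mat[of _ n n]) (auto intro: mc)
    also have "Q * M * (Ad * Q) = Q * (M * Ad) * Q" by (metis as mc cAd)
    also have "\<dots> = a \<cdot>\<^sub>m (Q * Q)" unfolding MAd
      by (simp add: mult_smult_one mult_smult_assoc_mat[of _ n n _ n] mc)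
    also have "c \<cdot>\<^sub>m K * (Ad * Q) = c \<cdot>\<^sub>m (K * (Ad * Q))"
      by (simp add: mult_smult_assoc_mat[of _ n n _ n] mc)
    finally have e2: "mtrace (Q * Ad * (Q * M)) = a * mtrace (Q * Q) - c * mtrace (K * (Ad * Q))"
      by (simp add: trm trs mc)
    have "mtrace (K * (Ad * Q)) = mtrace (Ad * Q * K)" by (rule trc) (auto intro: mc)
    with e1 e2 have "c * (mtrace (Q * Ad * K) + mtrace (Ad * Q * K)) = 0"
      by (simp add: algebra_simps)
    with c show ?thesis by (simp add: eq_neg_iff_add_eq_0 add.commute)
  qed
  have T5: "2 * a * mtrace (Q * Ad * K) = - c * mtrace (Ad * K * Ad * K)"
  proof -
    have "mtrace ((a \<cdot>\<^sub>m (Q * Ad) - a \<cdot>\<^sub>m (Ad * Q)) * K)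
        = mtrace (a \<cdot>\<^sub>m (Q * Ad) * K) - mtrace (a \<cdot>\<^sub>m (Ad * Q) * K)"
      by (subst minus_mult_distrib_mat[of _ n n]) (auto intro!: trm mc)
    also have "\<dots> = a * mtrace (Q * Ad * K) - a * mtrace (Ad * Q * K)"
      by (simp add: mult_smult_assoc_mat[of _ n n _ n] trs mc)
    finally have e1: "mtrace ((a \<cdot>\<^sub>m (Q * Ad) - a \<cdot>\<^sub>m (Ad * Q)) * K) = a * mtrace (Q * Ad * K) - a * mtrace (Ad * Q * K)" .
    have "a \<cdot>\<^sub>m (Q * Ad) - a \<cdot>\<^sub>m (Ad * Q) = - (c \<cdot>\<^sub>m (Ad * K * Ad))"
      unfolding T2 by (rule eq_matI) (auto simp: mc)
    hence "mtrace ((a \<cdot>\<^sub>m (Q * Ad) - a \<cdot>\<^sub>m (Ad * Q)) * K) = - c * mtrace (Ad * K * Ad * K)"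
      by (simp add: mult_smult_assoc_mat[of _ n n _ n] trs mc mtrace_uminus[of _ n])
    with e1 T4 show ?thesis by (simp add: algebra_simps)
  qed
  have T6: "mtrace (Ad * K * Ad * K) = mtrace Ad ^ 2 - mtrace (Ad * Ad)"
  proof -
    have cJ[simp]: "J \<in> carrier_mat n n" using J .
    have AK: "Ad * K = Ad * J - Ad" unfolding Kd
      by (subst mult_minus_distrib_mat[of _ n n]) auto
    have trAJ: "mtrace (Ad * J) = mtrace Ad" using T1 unfolding AK
      by (simp add: trm mc)
    have AKA: "Ad * K * Ad = Ad * J * Ad - Ad * Ad" unfolding AK
      by (rule minus_mult_distrib_mat[of _ n n]) (auto intro: mc)
    have trAAJ: "mtrace (Ad * Ad * J) = mtrace (Ad * Ad)"
    proof -
      have "mtrace (Ad * Ad * J) = mtrace (Ad * (Ad * J))" by (metis as mc cAd cJ)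
      also have "\<dots> = mtrace ((Ad * J) * Ad)" by (rule trc) (auto intro: mc)
      also have "\<dots> = mtrace (Ad * Ad)" using T3 unfolding AKA by (simp add: trm mc)
      finally show ?thesis .
    qed
    have "Ad * K * Ad * K = Ad * K * Ad * J - Ad * K * Ad" unfolding Kd
      by (subst mult_minus_distrib_mat[of _ n n]) (auto intro: mc)
    hence "mtrace (Ad * K * Ad * K) = mtrace (Ad * K * Ad * J)" using T3 by (simp add: trm mc)
    also have "Ad * K * Ad * J = Ad * J * Ad * J - Ad * Ad * J" unfolding AKA
      by (rule minus_mult_distrib_mat[of _ n n]) (auto intro: mc)
    also have "mtrace \<dots> = mtrace (Ad * J * Ad * J) - mtrace (Ad * Ad)"
      by (simp add: trm mc trAAJ)
    also have "Ad * J * Ad * J = (Ad * J) * (Ad * J)" by (metis as mc cAd cJ)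
    also have "mtrace \<dots> = mtrace Ad ^ 2" unfolding Jd using mtrace_ones2[of Ad n Ad] trAJ Jd
      by (simp add: power2_eq_square)
    finally show ?thesis .
  qed
  show ?thesis using T5 T6 by simp
qed

lemma core_T2:
  fixes M Ad Q K :: "'a::comm_ring_1 mat"
  assumes M: "M \<in> carrier_mat n n" and Ad: "Ad \<in> carrier_mat n n" and Q: "Q \<in> carrier_mat n n"
    and K: "K \<in> carrier_mat n n"
    and AdM: "Ad * M = a \<cdot>\<^sub>m 1\<^sub>m n" and MAd: "M * Ad = a \<cdot>\<^sub>m 1\<^sub>m n"
    and QM: "Q * M = M * Q + c \<cdot>\<^sub>m K"
  shows "a \<cdot>\<^sub>m (Ad * Q) = a \<cdot>\<^sub>m (Q * Ad) + c \<cdot>\<^sub>m (Ad * K * Ad)"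
proof -
  have dims[simp]: "dim_row M = n" "dim_col M = n" "dim_row Ad = n" "dim_col Ad = n"
    "dim_row Q = n" "dim_col Q = n" "dim_row K = n" "dim_col K = n" using M Ad Q K by auto
  note cAd[simp] = M Ad Q K
  note mc = mult_carrier_mat[of _ n n _ n]
  note as = assoc_mult_mat[of _ n n _ n _ n]
    have "Ad * (Q * M) * Ad = (Ad * Q) * (M * Ad)"
      by (metis as mc cAd)
    also have "\<dots> = a \<cdot>\<^sub>m (Ad * Q)" unfolding MAd by (rule mult_smult_one) simp
    finally have e1: "Ad * (Q * M) * Ad = a \<cdot>\<^sub>m (Ad * Q)" .
    have "Ad * (Q * M) * Ad = (Ad * (M * Q) + Ad * (c \<cdot>\<^sub>m K)) * Ad"
      unfolding QM by (subst mult_add_distrib_mat[of _ n n]) (auto intro: mc)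
    also have "\<dots> = Ad * (M * Q) * Ad + Ad * (c \<cdot>\<^sub>m K) * Ad"
      by (rule add_mult_distrib_mat[of _ n n]) (auto intro: mc)
    also have "Ad * (M * Q) * Ad = (Ad * M) * (Q * Ad)"
      by (metis as mc cAd)
    also have "\<dots> = a \<cdot>\<^sub>m (Q * Ad)" unfolding AdM by (rule smult_one_mult) simp
    also have "Ad * (c \<cdot>\<^sub>m K) * Ad = c \<cdot>\<^sub>m (Ad * K * Ad)"
      by (simp add: mult_smult_distrib[of _ n n _ n] mult_smult_assoc_mat[of _ n n _ n] mc)
    finally show ?thesis using e1 by simp
qed

lemma diag_mult_left:
  fixes X :: "'a::comm_ring_1 mat"
  assumes "X \<in> carrier_mat n m" "j < n" "k < m"
  shows "(mat n n (\<lambda>(j,k). if j = k then d j else 0) * X) $$ (j,k) = d j * X $$ (j,k)"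
proof -
  have "(mat n n (\<lambda>(j,k). if j = k then d j else 0) * X) $$ (j,k)
      = (\<Sum>i\<in>{0..<n}. (if j = i then d j else 0) * X $$ (i,k))"
    using assms by (simp add: scalar_prod_def)
  also have "\<dots> = (\<Sum>i\<in>{0..<n}. if j = i then d j * X $$ (i,k) else 0)"
    by (rule sum.cong) auto
  also have "\<dots> = d j * X $$ (j,k)" using assms by (simp add: sum.delta)
  finally show ?thesis .
qed

lemma diag_mult_right:
  fixes X :: "'a::comm_ring_1 mat"
  assumes "X \<in> carrier_mat m n" "j < m" "k < n"
  shows "(X * mat n n (\<lambda>(j,k). if j = k then d j else 0)) $$ (j,k) = X $$ (j,k) * d k"
proof -
  have "(X * mat n n (\<lambda>(j,k). if j = k then d j else 0)) $$ (j,k)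
      = (\<Sum>i\<in>{0..<n}. X $$ (j,i) * (if i = k then d i else 0))"
    using assms by (simp add: scalar_prod_def)
  also have "\<dots> = (\<Sum>i\<in>{0..<n}. if i = k then X $$ (j,i) * d k else 0)"
    by (rule sum.cong) auto
  also have "\<dots> = X $$ (j,k) * d k" using assms by (simp add: sum.delta)
  finally show ?thesis .
qed

lemma mtrace_diag3:
  fixes X B :: "'a::comm_ring_1 mat"
  assumes X: "X \<in> carrier_mat n n" and B: "B \<in> carrier_mat n n"
  shows "mtrace (mat n n (\<lambda>(j,k). if j = k then d j else 0) * X * B)
     = (\<Sum>j<n. \<Sum>k<n. d j * X $$ (j,k) * B $$ (k,j))"
proof -
  let ?Q = "mat n n (\<lambda>(j,k). if j = k then d j else 0)"
  have "mtrace (?Q * X * B) = (\<Sum>j<n. \<Sum>k<n. (?Q * X) $$ (j,k) * B $$ (k,j))"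
    using X B by (intro mtrace_mult_expand) auto
  also have "\<dots> = (\<Sum>j<n. \<Sum>k<n. d j * X $$ (j,k) * B $$ (k,j))"
    using X by (intro sum.cong refl) (simp add: diag_mult_left[OF X] del: index_mult_mat)
  finally show ?thesis .
qed

lemma mtrace_diag2:
  fixes X :: "'a::comm_ring_1 mat"
  assumes X: "X \<in> carrier_mat n n"
  shows "mtrace (mat n n (\<lambda>(j,k). if j = k then d j else 0) * X) = (\<Sum>j<n. d j * X $$ (j,j))"
proof -
  have "dim_row (mat n n (\<lambda>(j,k). if j = k then d j else 0) * X) = n" by simp
  then show ?thesis unfolding mtrace_def
    using diag_mult_left[OF X] by (auto simp del: index_mult_mat intro!: sum.cong)
qed

lemma core0:
  fixes M Ad K :: "'a::idom mat"
  assumes M: "M \<in> carrier_mat n n" and Ad: "Ad \<in> carrier_mat n n" and K: "K \<in> carrier_mat n n"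
    and Qd: "Q = mat n n (\<lambda>(j,k). if j = k then d j else 0)"
    and Kdiag: "\<And>j. j < n \<Longrightarrow> K $$ (j,j) = 0"
    and inj: "inj_on d {..<n}"
    and AdM: "Ad * M = a \<cdot>\<^sub>m 1\<^sub>m n" and MAd: "M * Ad = a \<cdot>\<^sub>m 1\<^sub>m n"
    and QM: "Q * M = M * Q + 0 \<cdot>\<^sub>m K"
    and a: "a \<noteq> 0"
  shows "mtrace (Q * Ad * K) = 0"
proof -
  have Q: "Q \<in> carrier_mat n n" unfolding Qd by simp
  have T2: "a \<cdot>\<^sub>m (Ad * Q) = a \<cdot>\<^sub>m (Q * Ad) + 0 \<cdot>\<^sub>m (Ad * K * Ad)"
    by (rule core_T2[OF M Ad Q K AdM MAd QM])
  have off: "Ad $$ (j,k) = 0" if jk: "j < n" "k < n" "j \<noteq> k" for j k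
  proof -
    have f1: "(a \<cdot>\<^sub>m (Ad * Q)) $$ (j,k) = (a \<cdot>\<^sub>m (Q * Ad) + 0 \<cdot>\<^sub>m (Ad * K * Ad)) $$ (j,k)"
      using T2 by simp
    have f2: "(Ad * Q) $$ (j,k) = Ad $$ (j,k) * d k" unfolding Qd by (rule diag_mult_right[OF Ad jk(1,2)])
    have f3: "(Q * Ad) $$ (j,k) = d j * Ad $$ (j,k)" unfolding Qd by (rule diag_mult_left[OF Ad jk(1,2)])
    have "a * (Ad $$ (j,k) * d k) = a * (d j * Ad $$ (j,k))"
      using carrier_matD[OF Ad] carrier_matD[OF Q] carrier_matD[OF K] jk f1 f2 f3 by (simp del: index_mult_mat(1))
    hence "Ad $$ (j,k) * (d k - d j) = 0" using a by (simp add: algebra_simps)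
    moreover have "d k \<noteq> d j" using inj jk by (metis inj_onD lessThan_iff)
    ultimately show ?thesis by simp
  qed
  have "mtrace (Q * Ad * K) = (\<Sum>j<n. \<Sum>k<n. d j * Ad $$ (j,k) * K $$ (k,j))"
    unfolding Qd by (rule mtrace_diag3[OF Ad K])
  also have "\<dots> = 0"
    by (intro sum.neutral ballI) (metis Kdiag lessThan_iff mult_not_zero off)
  finally show ?thesis .
qed

lemma pderiv_mat_mult:
  fixes X Y :: "'a::idom poly mat"
  assumes X: "X \<in> carrier_mat n m" and Y: "Y \<in> carrier_mat m k"
  shows "map_mat pderiv (X * Y) = map_mat pderiv X * Y + X * map_mat pderiv Y"
  by (rule eq_matI) (use X Y in \<open>auto simp: scalar_prod_def pderiv_sum pderiv_mult sum.distrib mult.commute\<close>)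

lemma char_poly_matrix_pderiv:
  fixes L :: "'a::idom mat"
  assumes L: "L \<in> carrier_mat n n"
  shows "map_mat pderiv (char_poly_matrix L) = 1\<^sub>m n"
  by (rule eq_matI) (use L in \<open>auto simp: char_poly_matrix_def pderiv_add pderiv_pCons\<close>)

lemma char_poly_matrix_delete:
  fixes L :: "'a::idom mat"
  assumes L: "L \<in> carrier_mat n n" and i: "i < n"
  shows "mat_delete (char_poly_matrix L) i i = char_poly_matrix (mat_delete L i i)"
  by (rule eq_matI) (use L i in \<open>auto simp: char_poly_matrix_def mat_delete_def\<close>)

lemma pderiv_char_poly_adj:
  fixes L :: "'a::idom mat"
  assumes L: "L \<in> carrier_mat n n"
  shows "pderiv (char_poly L) = mtrace (adj_mat (char_poly_matrix L))"
proof -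
  have "mtrace (adj_mat (char_poly_matrix L)) = (\<Sum>i<n. cofactor (char_poly_matrix L) i i)"
    using L unfolding mtrace_def adj_mat_def by (auto simp: char_poly_matrix_def)
  also have "\<dots> = (\<Sum>i<n. char_poly (mat_delete L i i))"
    by (intro sum.cong refl) (use L in \<open>auto simp: cofactor_def char_poly_matrix_delete char_poly_def\<close>)
  finally show ?thesis using pderiv_char_poly[OF L] by simp
qed

lemma deriv_key:
  fixes L :: "'a::idom mat"
  assumes L: "L \<in> carrier_mat n n"
  defines "a \<equiv> char_poly L" and "Ad \<equiv> adj_mat (char_poly_matrix L)"
  shows "a * pderiv (pderiv a) = mtrace Ad ^ 2 - mtrace (Ad * Ad)"
proof -
  let ?M = "char_poly_matrix L"
  let ?pd = "map_mat pderiv"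
  have M: "?M \<in> carrier_mat n n" using L by simp
  have Ad: "Ad \<in> carrier_mat n n" unfolding Ad_def using adj_mat(1)[OF M] .
  have AdM: "Ad * ?M = a \<cdot>\<^sub>m 1\<^sub>m n" unfolding Ad_def a_def char_poly_def using adj_mat(3)[OF M] .
  have MAd: "?M * Ad = a \<cdot>\<^sub>m 1\<^sub>m n" unfolding Ad_def a_def char_poly_def using adj_mat(2)[OF M] .
  have pAd: "?pd Ad \<in> carrier_mat n n" using Ad by simp
  have "?pd (Ad * ?M) = ?pd Ad * ?M + Ad * 1\<^sub>m n"
    using pderiv_mat_mult[OF Ad M] char_poly_matrix_pderiv[OF L] by simp
  also have "Ad * 1\<^sub>m n = Ad" using Ad by simp
  finally have e0: "?pd (Ad * ?M) = ?pd Ad * ?M + Ad" .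
  have "?pd (Ad * ?M) = pderiv a \<cdot>\<^sub>m 1\<^sub>m n" unfolding AdM
    by (rule eq_matI) (auto simp: pderiv_mult)
  with e0 have e: "?pd Ad * ?M + Ad = pderiv a \<cdot>\<^sub>m 1\<^sub>m n" by simp
  have "(?pd Ad * ?M + Ad) * Ad = ?pd Ad * ?M * Ad + Ad * Ad"
    by (rule add_mult_distrib_mat[of _ n n]) (use pAd M Ad in auto)
  also have "?pd Ad * ?M * Ad = ?pd Ad * (?M * Ad)" by (rule assoc_mult_mat[OF pAd M Ad])
  also have "\<dots> = a \<cdot>\<^sub>m ?pd Ad" unfolding MAd by (rule mult_smult_one) (use pAd in auto)
  finally have e1: "(?pd Ad * ?M + Ad) * Ad = a \<cdot>\<^sub>m ?pd Ad + Ad * Ad" .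
  have e2: "(pderiv a \<cdot>\<^sub>m 1\<^sub>m n) * Ad = pderiv a \<cdot>\<^sub>m Ad" by (rule smult_one_mult) (use Ad in auto)
  have "a \<cdot>\<^sub>m ?pd Ad + Ad * Ad = pderiv a \<cdot>\<^sub>m Ad" using e e1 e2 by simp
  hence "mtrace (a \<cdot>\<^sub>m ?pd Ad + Ad * Ad) = mtrace (pderiv a \<cdot>\<^sub>m Ad)" by simp
  hence tr: "a * mtrace (?pd Ad) + mtrace (Ad * Ad) = pderiv a * mtrace Ad"
    using pAd Ad by (simp add: mtrace_add[of _ n] mtrace_smult mult_carrier_mat[of _ n n _ n])
  have trpd: "mtrace (?pd Ad) = pderiv (mtrace Ad)"
    using Ad unfolding mtrace_def by (auto simp: pderiv_sum)
  have pa: "pderiv a = mtrace Ad" unfolding a_def Ad_def by (rule pderiv_char_poly_adj[OF L])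
  show ?thesis using tr trpd pa by (simp add: power2_eq_square algebra_simps)
qed

lemma hom_adj_mat:
  assumes h: "comm_ring_hom h" and X: "X \<in> carrier_mat n n"
  shows "adj_mat (map_mat h X) = map_mat h (adj_mat X)"
proof -
  interpret h: comm_ring_hom h by (rule h)
  have md: "mat_delete (map_mat h X) i j = map_mat h (mat_delete X i j)" for i j
    by (rule eq_matI) (auto simp: mat_delete_def)
  show ?thesis
    by (rule eq_matI) (use X in \<open>auto simp: adj_mat_def cofactor_def md h.hom_mult h.hom_power h.hom_uminus\<close>)
qed

lemma deriv_poly_fun: "deriv (\<lambda>z. poly p z) = (\<lambda>z. poly (pderiv p) z)"
  by (rule ext) (rule DERIV_imp_deriv[OF poly_DERIV])

lemma CM_L_carrier: "CM_L n g q p \<in> carrier_mat n n"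
  unfolding CM_L_def by simp

lemma CM_QM:
  fixes n :: nat and g :: real and q p :: "nat \<Rightarrow> real"
  assumes dec: "\<forall>j k. j < k \<and> k < n \<longrightarrow> q j > q k"
  defines "Qp \<equiv> mat n n (\<lambda>(j,k). if j = k then [: complex_of_real (q j) :] else 0)"
    and "Mp \<equiv> char_poly_matrix (CM_L n g q p)"
    and "Kp \<equiv> mat n n (\<lambda>_. 1) - 1\<^sub>m n"
  shows "Qp * Mp = Mp * Qp + [: - \<i> * complex_of_real g :] \<cdot>\<^sub>m Kp"
proof -
  let ?L = "CM_L n g q p"
  have L: "?L \<in> carrier_mat n n" by (rule CM_L_carrier)
  have Mp: "Mp \<in> carrier_mat n n" unfolding Mp_def using L by simp
  show ?thesis
  proof (rule eq_matI)
    fix j k assume j: "j < dim_row (Mp * Qp + [: - \<i> * complex_of_real g :] \<cdot>\<^sub>m Kp)"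
      and k: "k < dim_col (Mp * Qp + [: - \<i> * complex_of_real g :] \<cdot>\<^sub>m Kp)"
    hence j: "j < n" and k: "k < n" unfolding Kp_def by auto
    have e1: "(Qp * Mp) $$ (j,k) = [: complex_of_real (q j) :] * Mp $$ (j,k)"
      unfolding Qp_def by (rule diag_mult_left[OF Mp j k])
    have e2: "(Mp * Qp) $$ (j,k) = Mp $$ (j,k) * [: complex_of_real (q k) :]"
      unfolding Qp_def by (rule diag_mult_right[OF Mp j k])
    have Mjk: "Mp $$ (j,k) = (if j = k then [:0,1:] else 0) + [: - ?L $$ (j,k) :]"
      unfolding Mp_def char_poly_matrix_def using L j k by auto
    have Kjk: "Kp $$ (j,k) = (if j = k then 0 else 1)" unfolding Kp_def using j k by auto
    show "(Qp * Mp) $$ (j,k) = (Mp * Qp + [: - \<i> * complex_of_real g :] \<cdot>\<^sub>m Kp) $$ (j,k)"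
    proof (cases "j = k")
      case True
      then show ?thesis using e1 e2 Mjk Kjk j k Mp unfolding Kp_def
        by (simp del: index_mult_mat(1) add: mult.commute)
    next
      case False
      have qne: "q j \<noteq> q k" using dec j k False
        by (metis less_irrefl linorder_neqE_nat)
      hence qne': "complex_of_real (q j) - complex_of_real (q k) \<noteq> 0" by simp
      have Ljk: "?L $$ (j,k) = \<i> * complex_of_real g / complex_of_real (q j - q k)"
        unfolding CM_L_def using j k False by simp
      have key: "complex_of_real (q j) * ?L $$ (j,k) = ?L $$ (j,k) * complex_of_real (q k) + \<i> * complex_of_real g"
        unfolding Ljk using qne' by (simp add: field_simps)
      have "[: complex_of_real (q j) :] * [: - ?L $$ (j,k) :]
          = [: - ?L $$ (j,k) :] * [: complex_of_real (q k) :] + [: - \<i> * complex_of_real g :]"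
        using key by (simp add: algebra_simps)
      then show ?thesis using e1 e2 Mjk Kjk j k Mp False unfolding Kp_def
        by (simp del: index_mult_mat(1))
    qed
  qed (use Mp in \<open>auto simp: Qp_def Kp_def\<close>)
qed

theorem mainTheorem2:
  fixes n :: nat and g :: real and q p :: "nat \<Rightarrow> real" and z :: complex
  assumes "\<forall>j k. j < k \<and> k < n \<longrightarrow> q j > q k"
  shows "CM_C n g q p z = CM_D n g q p z
           + (\<i> * complex_of_real g / 2) * deriv (deriv (CM_A n g q p)) z"
proof -
  define Lc where "Lc = CM_L n g q p"
  define Mp where "Mp = char_poly_matrix Lc"
  define Adp where "Adp = adj_mat Mp"
  define a where "a = char_poly Lc"
  define Qp where "Qp = mat n n (\<lambda>(j,k). if j = k then [: complex_of_real (q j) :] else 0)"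
  define Jp :: "complex poly mat" where "Jp = mat n n (\<lambda>_. 1)"
  define Kp where "Kp = Jp - 1\<^sub>m n"
  define c where "c = [: - \<i> * complex_of_real g :]"
  define S where "S = mtrace (Qp * Adp * Kp)"
  have L: "Lc \<in> carrier_mat n n" unfolding Lc_def by (rule CM_L_carrier)
  have M: "Mp \<in> carrier_mat n n" unfolding Mp_def using L by simp
  have Ad: "Adp \<in> carrier_mat n n" unfolding Adp_def using adj_mat(1)[OF M] .
  have AdM: "Adp * Mp = a \<cdot>\<^sub>m 1\<^sub>m n" unfolding Adp_def a_def char_poly_def Mp_def using adj_mat(3)[OF M[unfolded Mp_def]] .
  have MAd: "Mp * Adp = a \<cdot>\<^sub>m 1\<^sub>m n" unfolding Adp_def a_def char_poly_def Mp_def using adj_mat(2)[OF M[unfolded Mp_def]] .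
  have Q: "Qp \<in> carrier_mat n n" unfolding Qp_def by simp
  have K: "Kp \<in> carrier_mat n n" unfolding Kp_def Jp_def by (simp add: minus_carrier_mat)
  have QM: "Qp * Mp = Mp * Qp + c \<cdot>\<^sub>m Kp"
    unfolding Qp_def Mp_def Kp_def Jp_def c_def Lc_def by (rule CM_QM[OF assms])
  have a0: "a \<noteq> 0"
  proof
    assume "a = 0"
    with degree_monic_char_poly[OF L] show False unfolding a_def by simp
  qed
  have dk: "a * pderiv (pderiv a) = mtrace Adp ^ 2 - mtrace (Adp * Adp)"
    unfolding a_def Adp_def Mp_def by (rule deriv_key[OF L])
  have S2: "2 * S = - c * pderiv (pderiv a)"
  proof (cases "g = 0")
    case True
    hence c0: "c = 0" unfolding c_def by simp
    have inj: "inj_on (\<lambda>j. [: complex_of_real (q j) :]) {..<n}"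
    proof (rule inj_onI)
      fix j k assume "j \<in> {..<n}" "k \<in> {..<n}" "[: complex_of_real (q j) :] = [: complex_of_real (q k) :]"
      thus "j = k" using assms by (metis lessThan_iff linorder_neqE_nat of_real_eq_iff order_less_irrefl pCons_eq_iff)
    qed
    have "S = 0" unfolding S_def
      by (rule core0[OF M Ad K Qp_def _ inj AdM MAd]) (use QM c0 a0 in \<open>auto simp: Kp_def Jp_def\<close>)
    thus ?thesis using c0 by simp
  next
    case False
    hence c0: "c \<noteq> 0" unfolding c_def by simp
    have "2 * a * S = - c * (mtrace Adp ^ 2 - mtrace (Adp * Adp))"
      unfolding S_def by (rule core[OF M Ad Q Jp_def Kp_def AdM MAd QM c0])
    hence "2 * a * S = - c * (a * pderiv (pderiv a))" unfolding dk .
    hence "a * (2 * S) = a * (- c * pderiv (pderiv a))" by (simp add: algebra_simps)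
    thus ?thesis using a0 mult_left_cancel by blast
  qed
  have evh: "comm_ring_hom (\<lambda>p::complex poly. poly p w)" for w
    by unfold_locales auto
  have Mz: "map_mat (\<lambda>p. poly p w) Mp = w \<cdot>\<^sub>m 1\<^sub>m n - Lc" for w
    by (rule eq_matI) (use L in \<open>auto simp: Mp_def char_poly_matrix_def\<close>)
  have Aw: "CM_A n g q p w = poly a w" for w
  proof -
    have "CM_A n g q p w = det (map_mat (\<lambda>p. poly p w) Mp)" unfolding CM_A_def Mz Lc_def ..
    also have "\<dots> = poly (det Mp) w" by (rule comm_ring_hom.hom_det[OF evh])
    finally show ?thesis unfolding a_def char_poly_def Mp_def .
  qed
  have A: "CM_A n g q p = (\<lambda>w. poly a w)" using Aw by (rule ext)
  have dd: "deriv (deriv (CM_A n g q p)) z = poly (pderiv (pderiv a)) z"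
    unfolding A deriv_poly_fun ..
  define X where "X = adj_mat (z \<cdot>\<^sub>m 1\<^sub>m n - Lc)"
  have X: "X = map_mat (\<lambda>p. poly p z) Adp" unfolding X_def Adp_def Mz[symmetric]
    by (rule hom_adj_mat[OF evh M])
  have Xc: "X \<in> carrier_mat n n" unfolding X using Ad by simp
  have Xe: "X $$ (j,k) = poly (Adp $$ (j,k)) z" if "j < n" "k < n" for j k
    unfolding X using Ad that by simp
  have C: "CM_C n g q p z = (\<Sum>j<n. \<Sum>k<n. complex_of_real (q j) * X $$ (j,k) * 1)"
    unfolding CM_C_def CM_Q_def ones_mat_def X_def[symmetric] Lc_def[symmetric]
    using mtrace_diag3[OF Xc, of "mat n n (\<lambda>_. 1)" "\<lambda>j. complex_of_real (q j)"] by simp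
  have D: "CM_D n g q p z = (\<Sum>j<n. complex_of_real (q j) * X $$ (j,j))"
    unfolding CM_D_def CM_Q_def X_def[symmetric] Lc_def[symmetric]
    by (rule mtrace_diag2[OF Xc])
  have "S = (\<Sum>j<n. \<Sum>k<n. [: complex_of_real (q j) :] * Adp $$ (j,k) * Kp $$ (k,j))"
    unfolding S_def Qp_def by (rule mtrace_diag3[OF Ad K])
  hence "poly S z = (\<Sum>j<n. \<Sum>k<n. complex_of_real (q j) * X $$ (j,k) * (if k = j then 0 else 1))"
    by (auto simp: poly_sum Xe Kp_def Jp_def intro!: sum.cong)
  also have "\<dots> = (\<Sum>j<n. (\<Sum>k<n. complex_of_real (q j) * X $$ (j,k) * 1) - complex_of_real (q j) * X $$ (j,j))"
  proof (intro sum.cong refl)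
    fix j assume j: "j \<in> {..<n}"
    have "(\<Sum>k<n. complex_of_real (q j) * X $$ (j,k) * (if k = j then 0 else 1))
        = (\<Sum>k<n. complex_of_real (q j) * X $$ (j,k) * 1 - (if k = j then complex_of_real (q j) * X $$ (j,k) else 0))"
      by (rule sum.cong) auto
    also have "\<dots> = (\<Sum>k<n. complex_of_real (q j) * X $$ (j,k) * 1) - complex_of_real (q j) * X $$ (j,j)"
      using j by (simp add: sum_subtractf sum.delta')
    finally show "(\<Sum>k<n. complex_of_real (q j) * X $$ (j,k) * (if k = j then 0 else 1))
        = (\<Sum>k<n. complex_of_real (q j) * X $$ (j,k) * 1) - complex_of_real (q j) * X $$ (j,j)" .
  qed
  also have "\<dots> = CM_C n g q p z - CM_D n g q p z" unfolding C D by (simp add: sum_subtractf)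
  finally have PS: "poly S z = CM_C n g q p z - CM_D n g q p z" .
  have "2 * poly S z = \<i> * complex_of_real g * poly (pderiv (pderiv a)) z"
    using arg_cong[OF S2, of "\<lambda>p. poly p z"] by (simp add: c_def)
  thus ?thesis using PS dd by (simp add: field_simps)
qed

end
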